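(* Let $(L_1,M_1,L_2,M_2)$ be a positive quadruple of Lagrangians in $\mathbf R^{2n}$. Then: (1) there exists a symplectic basis $(\mathbf e,\mathbf f)$ in standard position with respect to $(L_1,M_1,L_2,M_2)$, with associated diagonal matrix $\Lambda$; (2) any other symplectic basis in standard position with respect to $(L_1,M_1,L_2,M_2)$ is of the form $(\mathbf e\cdot h,\mathbf f\cdot h)$ for some $h\in \mathrm{O}(n)$ commuting with $\Lambda$; (3) setting $u=\Lambda^{1/2}$, the pair $(\mathbf e',\mathbf f')\mathrel{:=}(\mathbf f\cdot u,\,-\mathbf e\cdot u^{-1})$ is a symplectic basis in standard position with respect to $(L_2,M_2,L_1,M_1)$.
   Context: $\mathbf R^{2n}$ carries the standard symplectic form $\omega(x,y)={}^T x\begin{pmatrix}0&\mathrm{Id}\\-\mathrm{Id}&0\end{pmatrix}y$; Lagrangians are $n$-dimensional subspaces on which $\omega$ vanishes, and transverse means trivial intersection. For pairwise transverse Lagrangians $L_1,M,L_2$, let $M_{L_1\to L_2}\colon L_1\to L_2$ be the unique linear map whose graph $\{e+M_{L_1\to L_2}(e)\}$ is $M$; the Maslov form $[L_1,M,L_2]$ is the symmetric bilinear form $(v,w)\mapsto\omega(v,M_{L_1\to L_2}(w))$ on $L_1$. A quadruple $(L_1,M_1,L_2,M_2)$ is positive if $L_1,M_1,L_2$ and $L_2,M_2,L_1$ are pairwise transverse triples and $[L_1,M_1,L_2]$ and $[L_2,M_2,L_1]$ are positive definite. For families $\mathbf v=(v_1,\dots,v_n)$, $\mathbf w=(w_1,\dots,w_n)$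 and an $n\times n$ matrix $g$, $\mathbf v\cdot g$ is the family with $j$-th term $\sum_i v_i g_{ij}$, $\mathbf v+\mathbf w=(v_1+w_1,\dots,v_n+w_n)$, and $\omega(\mathbf v,\mathbf w)$ is the matrix $(\omega(v_i,w_j))$. A symplectic basis is a pair $(\mathbf e,\mathbf f)$ of $n$-tuples forming a basis with $\omega(\mathbf e,\mathbf e)=\omega(\mathbf f,\mathbf f)=0$ and $\omega(\mathbf e,\mathbf f)=\mathrm{Id}$. A symplectic basis $(\mathbf e,\mathbf f)$ is in standard position with respect to a positive quadruple $(L_1,M_1,L_2,M_2)$ if there is a diagonal matrix $\Lambda$ with positive nondecreasing diagonal entries such that $L_1=\mathrm{Span}(\mathbf e)$, $L_2=\mathrm{Span}(\mathbf f)$, $M_1=\mathrm{Span}(\mathbf e+\mathbf f)$, $M_2=\mathrm{Span}(\mathbf e-\mathbf f\cdot\Lambda)$. *)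

theory Defs
  imports "HOL-Analysis.Analysis"
begin

text \<open>Ambient space R^{2n} is modelled as real^('n + 'n): coordinates Inl i are the first
  n coordinates, Inr i the last n.  n = CARD('n).\<close>

type_synonym 'n sp = "real ^ ('n + 'n)"

definition omega :: "'n::finite sp \<Rightarrow> 'n sp \<Rightarrow> real" where
  "omega x y = (\<Sum>i\<in>UNIV. x $ Inl i * y $ Inr i - x $ Inr i * y $ Inl i)"

definition lagrangian :: "'n::finite sp set \<Rightarrow> bool" where
  "lagrangian L \<longleftrightarrow> subspace L \<and> dim L = CARD('n) \<and> (\<forall>x\<in>L. \<forall>y\<in>L. omega x y = 0)"

definition transverse :: "'n::finite sp set \<Rightarrow> 'n sp set \<Rightarrow> bool" where
  "transverse L M \<longleftrightarrow> L \<inter> M = {0}"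

definition pw_transverse :: "'n::finite sp set \<Rightarrow> 'n sp set \<Rightarrow> 'n sp set \<Rightarrow> bool" where
  "pw_transverse A B C \<longleftrightarrow> lagrangian A \<and> lagrangian B \<and> lagrangian C \<and>
     transverse A B \<and> transverse B C \<and> transverse A C"

definition graph_map :: "'n::finite sp set \<Rightarrow> 'n sp set \<Rightarrow> 'n sp set \<Rightarrow> 'n sp \<Rightarrow> 'n sp" where
  "graph_map L1 M L2 e = (THE w. w \<in> L2 \<and> e + w \<in> M)"

definition maslov_form :: "'n::finite sp set \<Rightarrow> 'n sp set \<Rightarrow> 'n sp set \<Rightarrow> 'n sp \<Rightarrow> 'n sp \<Rightarrow> real" where
  "maslov_form L1 M L2 v w = omega v (graph_map L1 M L2 w)"

definition pos_def_on :: "'n::finite sp set \<Rightarrow> ('n sp \<Rightarrow> 'n sp \<Rightarrow> real) \<Rightarrow> bool" where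
  "pos_def_on L B \<longleftrightarrow> (\<forall>v\<in>L. v \<noteq> 0 \<longrightarrow> B v v > 0)"

definition positive_quadruple :: "'n::finite sp set \<Rightarrow> 'n sp set \<Rightarrow> 'n sp set \<Rightarrow> 'n sp set \<Rightarrow> bool" where
  "positive_quadruple L1 M1 L2 M2 \<longleftrightarrow>
     pw_transverse L1 M1 L2 \<and> pw_transverse L2 M2 L1 \<and>
     pos_def_on L1 (maslov_form L1 M1 L2) \<and> pos_def_on L2 (maslov_form L2 M2 L1)"

definition fam_mult :: "('n::finite \<Rightarrow> 'n sp) \<Rightarrow> real^'n^'n \<Rightarrow> ('n \<Rightarrow> 'n sp)" (infixl "\<cdot>\<^sub>f" 70) where
  "fam_mult v g = (\<lambda>j. \<Sum>i\<in>UNIV. g $ i $ j *\<^sub>R v i)"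

definition omega_mat :: "('n::finite \<Rightarrow> 'n sp) \<Rightarrow> ('n \<Rightarrow> 'n sp) \<Rightarrow> real^'n^'n" where
  "omega_mat v w = (\<chi> i j. omega (v i) (w j))"

definition symplectic_basis :: "('n::finite \<Rightarrow> 'n sp) \<Rightarrow> ('n \<Rightarrow> 'n sp) \<Rightarrow> bool" where
  "symplectic_basis e f \<longleftrightarrow>
     inj (case_sum e f) \<and> independent (range (case_sum e f)) \<and> span (range (case_sum e f)) = UNIV \<and>
     omega_mat e e = 0 \<and> omega_mat f f = 0 \<and> omega_mat e f = mat 1"

definition std_diag :: "real^('n::{finite,linorder})^('n::{finite,linorder}) \<Rightarrow> bool" where
  "std_diag \<Lambda> \<longleftrightarrow> (\<forall>i j. i \<noteq> j \<longrightarrow> \<Lambda> $ i $ j = 0) \<and> (\<forall>i. \<Lambda> $ i $ i > 0) \<and>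
     (\<forall>i j. i \<le> j \<longrightarrow> \<Lambda> $ i $ i \<le> \<Lambda> $ j $ j)"

definition std_position_with ::
  "(('n::{finite,linorder}) \<Rightarrow> ('n::{finite,linorder}) sp) \<Rightarrow> ('n \<Rightarrow> 'n sp) \<Rightarrow> real^('n::{finite,linorder})^('n::{finite,linorder}) \<Rightarrow>
   'n sp set \<Rightarrow> 'n sp set \<Rightarrow> 'n sp set \<Rightarrow> 'n sp set \<Rightarrow> bool" where
  "std_position_with e f \<Lambda> L1 M1 L2 M2 \<longleftrightarrow> std_diag \<Lambda> \<and>
     L1 = span (range e) \<and> L2 = span (range f) \<and>
     M1 = span (range (\<lambda>i. e i + f i)) \<and>
     M2 = span (range (\<lambda>i. e i - (f \<cdot>\<^sub>f \<Lambda>) i))"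

definition std_position ::
  "(('n::{finite,linorder}) \<Rightarrow> ('n::{finite,linorder}) sp) \<Rightarrow> ('n \<Rightarrow> 'n sp) \<Rightarrow>
   'n sp set \<Rightarrow> 'n sp set \<Rightarrow> 'n sp set \<Rightarrow> 'n sp set \<Rightarrow> bool" where
  "std_position e f L1 M1 L2 M2 \<longleftrightarrow> (\<exists>\<Lambda>. std_position_with e f \<Lambda> L1 M1 L2 M2)"

definition diag_sqrt :: "real^('n::finite)^('n::finite) \<Rightarrow> real^'n^'n" where
  "diag_sqrt \<Lambda> = (\<chi> i j. if i = j then sqrt (\<Lambda> $ i $ i) else 0)"

end

theory Submission
  imports Defs
begin

lemma omega_add_left: "omega (x + y) z = omega x z + omega y z"
  by (simp add: omega_def algebra_simps sum.distrib sum_subtractf)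
lemma omega_add_right: "omega x (y + z) = omega x y + omega x z"
  by (simp add: omega_def algebra_simps sum.distrib sum_subtractf)
lemma omega_scale_left: "omega (c *\<^sub>R x) z = c * omega x z"
  by (simp add: omega_def algebra_simps sum_distrib_left sum_subtractf)
lemma omega_scale_right: "omega x (c *\<^sub>R z) = c * omega x z"
  by (simp add: omega_def algebra_simps sum_distrib_left sum_subtractf)
lemma omega_antisym: "omega y x = - omega x y"
  by (simp add: omega_def algebra_simps sum_subtractf)
lemma omega_self[simp]: "omega x x = 0"
  using omega_antisym[of x x] by simp
lemma linear_omega_left: "linear (\<lambda>x. omega x z)"
  by (rule linearI) (simp_all add: omega_add_left omega_scale_left)
lemma linear_omega_right: "linear (\<lambda>z. omega x z)"
  by (rule linearI) (simp_all add: omega_add_right omega_scale_right)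
lemma omega_diff_left: "omega (x - y) z = omega x z - omega y z"
  using linear_diff[OF linear_omega_left] by blast
lemma omega_diff_right: "omega z (x - y) = omega z x - omega z y"
  using linear_diff[OF linear_omega_right] by blast
lemma omega_neg_left: "omega (- x) z = - omega x z"
  using linear_neg[OF linear_omega_left] by blast
lemma omega_neg_right: "omega z (- x) = - omega z x"
  using linear_neg[OF linear_omega_right] by blast
lemma omega_zero_left[simp]: "omega 0 z = 0"
  using linear_0[OF linear_omega_left] by blast
lemma omega_zero_right[simp]: "omega z 0 = 0"
  using linear_0[OF linear_omega_right] by blast
lemma omega_sum_left: "omega (\<Sum>i\<in>A. g i) z = (\<Sum>i\<in>A. omega (g i) z)"
  using linear_sum[OF linear_omega_left] by blast
lemma omega_sum_right: "omega z (\<Sum>i\<in>A. g i) = (\<Sum>i\<in>A. omega z (g i))"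
  using linear_sum[OF linear_omega_right] by blast

lemmas omega_simps = omega_add_left omega_add_right omega_scale_left omega_scale_right
  omega_diff_left omega_diff_right omega_neg_left omega_neg_right omega_sum_left omega_sum_right

lemma sum_delta_mult: "(\<Sum>k\<in>UNIV. (f k::real) * (if k = i then 1 else 0)) = f (i::'a::finite)"
proof -
  have "(\<Sum>k\<in>UNIV. (f k::real) * (if k = i then 1 else 0)) = (\<Sum>k\<in>UNIV. if k = i then f k else 0)"
    by (rule sum.cong) auto
  then show ?thesis by simp
qed

lemma omega_nondeg:
  fixes y :: "'n::finite sp"
  assumes "\<And>z. omega y z = 0" shows "y = 0"
proof -
  have "y $ Inl i = 0" for i
    using assms[of "axis (Inr i) 1"] by (simp add: omega_def axis_def sum_delta_mult)
  moreover have "y $ Inr i = 0" for i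
    using assms[of "axis (Inl i) 1"] by (simp add: omega_def axis_def sum_delta_mult sum_negf)
  ultimately show ?thesis by (metis sum.exhaust vec_eq_iff zero_index)
qed

lemma omega_span_right:
  assumes "\<And>s. s \<in> S \<Longrightarrow> omega y s = 0" "z \<in> span S" shows "omega y z = 0"
  using assms(2)
proof (induction rule: span_induct_alt)
  case base then show ?case by simp
next
  case (step c x y) then show ?case using assms(1) by (simp add: omega_simps)
qed

lemma sum_delta_mult2: "(\<Sum>k\<in>UNIV. (if k = i then 1 else 0) * (f k::real)) = f (i::'a::finite)"
proof -
  have "(\<Sum>k\<in>UNIV. (if k = i then 1 else 0) * (f k::real)) = (\<Sum>k\<in>UNIV. if k = i then f k else 0)"
    by (rule sum.cong) auto
  then show ?thesis by simp
qed
lemma sum_delta_mult3: "(\<Sum>k\<in>UNIV. (f k::real) * (if i = k then 1 else 0)) = f (i::'a::finite)"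
proof -
  have "(\<Sum>k\<in>UNIV. (f k::real) * (if i = k then 1 else 0)) = (\<Sum>k\<in>UNIV. if k = i then f k else 0)"
    by (rule sum.cong) auto
  then show ?thesis by simp
qed
lemma sum_delta_mult4: "(\<Sum>k\<in>UNIV. (if i = k then 1 else 0) * (f k::real)) = f (i::'a::finite)"
proof -
  have "(\<Sum>k\<in>UNIV. (if i = k then 1 else 0) * (f k::real)) = (\<Sum>k\<in>UNIV. if k = i then f k else 0)"
    by (rule sum.cong) auto
  then show ?thesis by simp
qed

lemma sum_delta_multc: "(\<Sum>k\<in>UNIV. (f k::real) * (if k = i then c else 0)) = f (i::'a::finite) * c"
proof -
  have "(\<Sum>k\<in>UNIV. (f k::real) * (if k = i then c else 0)) = (\<Sum>k\<in>UNIV. if k = i then f k * c else 0)"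
    by (rule sum.cong) auto
  then show ?thesis by simp
qed

lemma sb_intro:
  fixes e f :: "'n::finite \<Rightarrow> 'n sp"
  assumes ee: "\<And>i j. omega (e i) (e j) = 0" and ff: "\<And>i j. omega (f i) (f j) = 0"
    and ef: "\<And>i j. omega (e i) (f j) = (if i = j then 1 else 0)"
  shows "symplectic_basis e f"
proof -
  let ?S = "range (case_sum e f)"
  have fe: "omega (f i) (e j) = - (if j = i then 1 else 0)" for i j
    using omega_antisym[of "f i" "e j"] ef by simp
  have inj: "inj (case_sum e f)"
  proof (rule injI)
    fix x y assume xy: "case_sum e f x = case_sum e f y"
    show "x = y"
    proof (cases x; cases y)
      fix a b assume ab: "x = Inl a" "y = Inl b"
      then have "e a = e b" using xy by simp
      then have "omega (e b) (f a) = 1" using ef[of a a] by simp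
      then have "a = b" using ef[of b a] by (simp split: if_splits)
      then show "x = y" using ab by simp
    next
      fix a b assume ab: "x = Inl a" "y = Inr b"
      then have "e a = f b" using xy by simp
      then have "omega (f b) (f a) = 1" using ef[of a a] by simp
      then show "x = y" using ff[of b a] by simp
    next
      fix a b assume ab: "x = Inr a" "y = Inl b"
      then have "f a = e b" using xy by simp
      then have "omega (f a) (f b) = 1" using ef[of b b] by simp
      then show "x = y" using ff[of a b] by simp
    next
      fix a b assume ab: "x = Inr a" "y = Inr b"
      then have "f a = f b" using xy by simp
      then have "omega (e a) (f b) = 1" using ef[of a a] by simp
      then have "a = b" using ef[of a b] by (simp split: if_splits)
      then show "x = y" using ab by simp
    qed
  qed
  have indep: "independent ?S"
    unfolding dependent_def
  proof
    assume "\<exists>a\<in>?S. a \<in> span (?S - {a})"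
    then obtain x where x: "case_sum e f x \<in> span (?S - {case_sum e f x})" by blast
    show False
    proof (cases x)
      case (Inl k)
      have mem: "e k \<in> span (?S - {e k})" using x Inl by simp
      have "omega (f k) (e k) = 0"
      proof (rule omega_span_right[of "?S - {e k}"])
        fix s assume "s \<in> ?S - {e k}"
        then obtain z where z: "s = case_sum e f z" "s \<noteq> e k" by blast
        then show "omega (f k) s = 0" using fe ff by (cases z) auto
      qed (rule mem)
      then show False using fe[of k k] by simp
    next
      case (Inr k)
      have mem: "f k \<in> span (?S - {f k})" using x Inr by simp
      have "omega (e k) (f k) = 0"
      proof (rule omega_span_right[of "?S - {f k}"])
        fix s assume "s \<in> ?S - {f k}"
        then obtain z where z: "s = case_sum e f z" "s \<noteq> f k" by blast
        then show "omega (e k) s = 0" using ee ef by (cases z) auto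
      qed (rule mem)
      then show False using ef[of k k] by simp
    qed
  qed
  have "card ?S = CARD('n + 'n)" using inj by (simp add: card_image)
  then have "dim ?S = DIM('n sp)" using dim_eq_card_independent[OF indep] by simp
  then have span: "span ?S = UNIV" using dim_eq_full by blast
  have m1: "omega_mat e e = 0" by (simp add: omega_mat_def vec_eq_iff ee)
  have m2: "omega_mat f f = 0" by (simp add: omega_mat_def vec_eq_iff ff)
  have m3: "omega_mat e f = mat 1" unfolding omega_mat_def mat_def vec_eq_iff using ef by simp
  show ?thesis unfolding symplectic_basis_def using inj indep span m1 m2 m3 by blast
qed

lemma sb_dest:
  assumes "symplectic_basis e f"
  shows "omega (e i) (e j) = 0" "omega (f i) (f j) = 0"
    "omega (e i) (f j) = (if i = j then 1 else 0)"
    "omega (f i) (e j) = (if i = j then -1 else 0)"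
    "span (range (case_sum e f)) = UNIV"
proof -
  have m: "omega_mat e e = 0" "omega_mat f f = 0" "omega_mat e f = mat 1"
    using assms unfolding symplectic_basis_def by auto
  show "omega (e i) (e j) = 0" using arg_cong[OF m(1), of "\<lambda>M. M $ i $ j"] by (simp add: omega_mat_def)
  show "omega (f i) (f j) = 0" using arg_cong[OF m(2), of "\<lambda>M. M $ i $ j"] by (simp add: omega_mat_def)
  show ef: "omega (e i) (f j) = (if i = j then 1 else 0)" for i j
    using arg_cong[OF m(3), of "\<lambda>M. M $ i $ j"] by (simp add: omega_mat_def mat_def)
  show "omega (f i) (e j) = (if i = j then -1 else 0)"
    using omega_antisym[of "f i" "e j"] ef[of j i] by auto
  show "span (range (case_sum e f)) = UNIV" using assms unfolding symplectic_basis_def by auto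
qed

lemma sb_expand:
  fixes e f :: "'n::finite \<Rightarrow> 'n sp"
  assumes sb: "symplectic_basis e f"
  shows "x = (\<Sum>i\<in>UNIV. omega x (f i) *\<^sub>R e i) - (\<Sum>i\<in>UNIV. omega x (e i) *\<^sub>R f i)"
proof -
  define y where "y = x - ((\<Sum>i\<in>UNIV. omega x (f i) *\<^sub>R e i) - (\<Sum>i\<in>UNIV. omega x (e i) *\<^sub>R f i))"
  note d = sb_dest[OF sb]
  have "omega y z = 0" for z
  proof (rule omega_span_right[of "range (case_sum e f)"])
    fix s assume "s \<in> range (case_sum e f)"
    then obtain w where w: "s = case_sum e f w" by blast
    show "omega y s = 0"
    proof (cases w)
      case (Inl k)
      then show ?thesis using w unfolding y_def
        by (simp add: omega_simps d(1) d(4) sum_delta_multc)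
    next
      case (Inr k)
      then show ?thesis using w unfolding y_def
        by (simp add: omega_simps d(2) d(3) sum_delta_mult)
    qed
  qed (simp add: d(5))
  then have "y = 0" by (rule omega_nondeg)
  then show ?thesis unfolding y_def by simp
qed

lemma sb_span_char:
  fixes e f :: "'n::finite \<Rightarrow> 'n sp"
  assumes sb: "symplectic_basis e f" and h: "\<And>k. omega x (e k + c k *\<^sub>R f k) = 0"
  shows "x \<in> span (range (\<lambda>j. e j + c j *\<^sub>R f j))"
proof -
  have ek: "omega x (e k) = - c k * omega x (f k)" for k
    using h[of k] by (simp add: omega_simps)
  have "x = (\<Sum>i\<in>UNIV. omega x (f i) *\<^sub>R e i) - (\<Sum>i\<in>UNIV. omega x (e i) *\<^sub>R f i)"
    by (rule sb_expand[OF sb])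
  also have "\<dots> = (\<Sum>i\<in>UNIV. omega x (f i) *\<^sub>R (e i + c i *\<^sub>R f i))"
    by (simp add: ek scaleR_add_right sum.distrib sum_negf algebra_simps)
  finally have x: "x = (\<Sum>i\<in>UNIV. omega x (f i) *\<^sub>R (e i + c i *\<^sub>R f i))" .
  show ?thesis
    by (subst x, rule span_sum, rule span_mul, rule span_base) auto
qed

lemma sb_span_char_e:
  fixes e f :: "'n::finite \<Rightarrow> 'n sp"
  assumes sb: "symplectic_basis e f" and h: "\<And>k. omega x (e k) = 0"
  shows "x \<in> span (range e)"
  using sb_span_char[OF sb, of x "\<lambda>_. 0"] h by simp

lemma sb_span_char_f:
  fixes e f :: "'n::finite \<Rightarrow> 'n sp"
  assumes sb: "symplectic_basis e f" and h: "\<And>k. omega x (f k) = 0"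
  shows "x \<in> span (range f)"
proof -
  have "x = (\<Sum>i\<in>UNIV. omega x (f i) *\<^sub>R e i) - (\<Sum>i\<in>UNIV. omega x (e i) *\<^sub>R f i)"
    by (rule sb_expand[OF sb])
  also have "\<dots> = (\<Sum>i\<in>UNIV. (- omega x (e i)) *\<^sub>R f i)"
    by (simp add: h sum_negf)
  finally have x: "x = (\<Sum>i\<in>UNIV. (- omega x (e i)) *\<^sub>R f i)" .
  show ?thesis
    by (subst x, rule span_sum, rule span_mul, rule span_base) auto
qed

lemma span_scale_family:
  fixes g :: "'i \<Rightarrow> 'a::real_vector"
  assumes "\<And>j. c j \<noteq> 0"
  shows "span (range (\<lambda>j. c j *\<^sub>R g j)) = span (range g)"
  unfolding span_eq
proof (intro conjI subsetI)
  fix x assume "x \<in> range (\<lambda>j. c j *\<^sub>R g j)"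
  then obtain j where "x = c j *\<^sub>R g j" by blast
  then show "x \<in> span (range g)" by (simp add: span_base span_mul)
next
  fix x assume "x \<in> range g"
  then obtain j where j: "x = g j" by blast
  have "x = inverse (c j) *\<^sub>R (c j *\<^sub>R g j)" using assms[of j] j by simp
  then show "x \<in> span (range (\<lambda>j. c j *\<^sub>R g j))"
    by (metis (no_types, lifting) rangeI span_base span_mul)
qed

lemma lagr_omega: "lagrangian L \<Longrightarrow> x \<in> L \<Longrightarrow> y \<in> L \<Longrightarrow> omega x y = 0"
  unfolding lagrangian_def by blast
lemma lagr_subspace: "lagrangian L \<Longrightarrow> subspace L"
  unfolding lagrangian_def by blast

definition diagm :: "('n::finite \<Rightarrow> real) \<Rightarrow> real^'n^'n" where
  "diagm d = (\<chi> i j. if i = j then d i else 0)"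

lemma fam_mult_diag: "v \<cdot>\<^sub>f diagm d = (\<lambda>j. d j *\<^sub>R v j)"
proof
  fix j
  have "(\<Sum>i\<in>UNIV. (if i = j then d i else 0) *\<^sub>R v i) = (\<Sum>i\<in>UNIV. if i = j then d j *\<^sub>R v j else 0)"
    by (rule sum.cong) auto
  then show "(v \<cdot>\<^sub>f diagm d) j = d j *\<^sub>R v j"
    by (simp add: fam_mult_def diagm_def)
qed

lemma mult_diag_right: "(A ** diagm d) $ i $ j = A $ i $ j * d j"
proof -
  have "(\<Sum>k\<in>UNIV. A $ i $ k * (if k = j then d k else 0)) = (\<Sum>k\<in>UNIV. if k = j then A $ i $ j * d j else 0)"
    by (rule sum.cong) auto
  then show ?thesis by (simp add: matrix_matrix_mult_def diagm_def)
qed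

lemma mult_diag_left: "(diagm d ** A) $ i $ j = d i * A $ i $ j"
proof -
  have "(\<Sum>k\<in>UNIV. (if i = k then d i else 0) * A $ k $ j) = (\<Sum>k\<in>UNIV. if k = i then d i * A $ i $ j else 0)"
    by (rule sum.cong) auto
  then show ?thesis by (simp add: matrix_matrix_mult_def diagm_def)
qed

lemma diagm_inv:
  assumes "\<And>i. d i \<noteq> 0"
  shows "matrix_inv (diagm d) = diagm (\<lambda>i. inverse (d i))"
proof -
  let ?D = "diagm d" and ?D' = "diagm (\<lambda>i. inverse (d i))"
  have a: "?D ** ?D' = mat 1"
    unfolding vec_eq_iff by (intro allI, subst mult_diag_right) (simp add: diagm_def mat_def assms)
  have b: "?D' ** ?D = mat 1"
    unfolding vec_eq_iff by (intro allI, subst mult_diag_right) (simp add: diagm_def mat_def assms)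
  show ?thesis unfolding matrix_inv_def
  proof (rule someI2[where a = ?D'])
    show "?D ** ?D' = mat 1 \<and> ?D' ** ?D = mat 1" using a b by simp
  next
    fix A' assume "?D ** A' = mat 1 \<and> A' ** ?D = mat 1"
    then have "A' = A' ** (?D ** ?D')" "A' ** ?D = mat 1" using a by auto
    then show "A' = ?D'" by (simp add: matrix_mul_assoc)
  qed
qed

lemma std_diag_diagm: "std_diag \<Lambda> \<Longrightarrow> \<Lambda> = diagm (\<lambda>i. \<Lambda> $ i $ i)"
  unfolding std_diag_def diagm_def by (simp add: vec_eq_iff)

lemma diag_sqrt_diagm: "diag_sqrt \<Lambda> = diagm (\<lambda>i. sqrt (\<Lambda> $ i $ i))"
  unfolding diag_sqrt_def diagm_def by simp

lemma part3:
  fixes e f :: "'n::{finite,linorder} \<Rightarrow> 'n sp"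
  assumes sb: "symplectic_basis e f" and sp: "std_position_with e f \<Lambda> L1 M1 L2 M2"
  shows "let u = diag_sqrt \<Lambda>;
          e' = f \<cdot>\<^sub>f u;
          f' = (\<lambda>i. - (e \<cdot>\<^sub>f matrix_inv u) i)
      in symplectic_basis e' f' \<and> std_position e' f' L2 M2 L1 M1"
proof -
  define l where "l i = \<Lambda> $ i $ i" for i
  define s where "s i = sqrt (l i)" for i
  have sd: "std_diag \<Lambda>" using sp unfolding std_position_with_def by blast
  have lpos: "l i > 0" for i using sd unfolding std_diag_def l_def by blast
  have spos: "s i > 0" for i using lpos unfolding s_def by simp
  have ss: "s i * s i = l i" for i using lpos[of i] unfolding s_def by simp
  have Ld: "\<Lambda> = diagm l" using std_diag_diagm[OF sd] unfolding l_def by simp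
  have u: "diag_sqrt \<Lambda> = diagm s" unfolding diag_sqrt_diagm s_def l_def by simp
  have ui: "matrix_inv (diagm s) = diagm (\<lambda>i. inverse (s i))"
    using spos by (intro diagm_inv) (simp add: less_imp_neq[symmetric])
  define e' where "e' = (\<lambda>j. s j *\<^sub>R f j)"
  define f' where "f' = (\<lambda>j. (- inverse (s j)) *\<^sub>R e j)"
  have e'eq: "f \<cdot>\<^sub>f diag_sqrt \<Lambda> = e'" unfolding u fam_mult_diag e'_def by simp
  have f'eq: "(\<lambda>i. - (e \<cdot>\<^sub>f matrix_inv (diag_sqrt \<Lambda>)) i) = f'"
    unfolding u ui fam_mult_diag f'_def by simp
  note d = sb_dest[OF sb]
  have sb': "symplectic_basis e' f'"
  proof (rule sb_intro)
    show "omega (e' i) (e' j) = 0" for i j unfolding e'_def by (simp add: omega_simps d)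
    show "omega (f' i) (f' j) = 0" for i j unfolding f'_def by (simp add: omega_simps d)
    show "omega (e' i) (f' j) = (if i = j then 1 else 0)" for i j
      unfolding e'_def f'_def using spos[of j] by (simp add: omega_simps d)
  qed
  have L1: "L1 = span (range e)" and L2: "L2 = span (range f)"
    and M1: "M1 = span (range (\<lambda>i. e i + f i))"
    and M2: "M2 = span (range (\<lambda>i. e i - (f \<cdot>\<^sub>f \<Lambda>) i))"
    using sp unfolding std_position_with_def by auto
  have nz: "s j \<noteq> 0" "- inverse (s j) \<noteq> 0" for j using spos[of j] by auto
  have "std_position_with e' f' \<Lambda> L2 M2 L1 M1"
    unfolding std_position_with_def
  proof (intro conjI)
    show "std_diag \<Lambda>" by (rule sd)
    show "L2 = span (range e')" unfolding L2 e'_def by (rule span_scale_family[symmetric]) (rule nz)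
    show "L1 = span (range f')" unfolding L1 f'_def by (rule span_scale_family[symmetric]) (rule nz)
    have eq2: "(\<lambda>i. e' i + f' i) = (\<lambda>i. (- inverse (s i)) *\<^sub>R (e i - (f \<cdot>\<^sub>f \<Lambda>) i))"
    proof
      fix i
      have "inverse (s i) * l i = s i" using ss[of i] spos[of i]
        by (metis nonzero_mult_div_cancel_left divide_inverse_commute less_irrefl)
      then show "e' i + f' i = (- inverse (s i)) *\<^sub>R (e i - (f \<cdot>\<^sub>f \<Lambda>) i)"
        unfolding e'_def f'_def Ld fam_mult_diag by (simp add: algebra_simps)
    qed
    show "M2 = span (range (\<lambda>i. e' i + f' i))"
      unfolding M2 eq2 by (rule span_scale_family[symmetric]) (rule nz)
    have eq1: "(\<lambda>i. e' i - (f' \<cdot>\<^sub>f \<Lambda>) i) = (\<lambda>i. s i *\<^sub>R (e i + f i))"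
    proof
      fix i
      have "l i * inverse (s i) = s i" using ss[of i] spos[of i]
        by (metis nonzero_mult_div_cancel_left divide_inverse_commute less_irrefl mult.commute)
      then show "e' i - (f' \<cdot>\<^sub>f \<Lambda>) i = s i *\<^sub>R (e i + f i)"
        unfolding e'_def f'_def Ld fam_mult_diag by (simp add: algebra_simps)
    qed
    show "M1 = span (range (\<lambda>i. e' i - (f' \<cdot>\<^sub>f \<Lambda>) i))"
      unfolding M1 eq1 by (rule span_scale_family[symmetric]) (rule nz)
  qed
  then have "std_position e' f' L2 M2 L1 M1" unfolding std_position_def by blast
  then show ?thesis using sb' e'eq f'eq by (simp add: Let_def)
qed

lemma downsets_nested:
  fixes A B :: "'a::linorder set"
  assumes "\<And>x y. y \<le> x \<Longrightarrow> x \<in> A \<Longrightarrow> y \<in> A" "\<And>x y. y \<le> x \<Longrightarrow> x \<in> B \<Longrightarrow> y \<in> B"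
  shows "A \<subseteq> B \<or> B \<subseteq> A"
proof (rule ccontr)
  assume "\<not> (A \<subseteq> B \<or> B \<subseteq> A)"
  then obtain a b where ab: "a \<in> A" "a \<notin> B" "b \<in> B" "b \<notin> A" by blast
  show False
  proof (cases "a \<le> b")
    case True then show False using assms(2)[OF True ab(3)] ab(2) by blast
  next
    case False then have "b \<le> a" by simp
    then show False using assms(1)[OF _ ab(1)] ab(4) by blast
  qed
qed

lemma sorted_perm_eq:
  fixes l m :: "'n::{finite,linorder} \<Rightarrow> real"
  assumes ml: "\<And>i j. i \<le> j \<Longrightarrow> l i \<le> l j" and mm: "\<And>i j. i \<le> j \<Longrightarrow> m i \<le> m j"
    and p: "p permutes UNIV" and pm: "\<And>i. m (p i) = l i"
  shows "l = m"
proof -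
  have key: "{i. l i \<le> t} = {j. m j \<le> t}" for t
  proof -
    let ?A = "{i. l i \<le> t}" and ?B = "{j. m j \<le> t}"
    have img: "p ` ?A = ?B"
    proof
      show "p ` ?A \<subseteq> ?B" using pm by auto
      show "?B \<subseteq> p ` ?A"
      proof
        fix j assume j: "j \<in> ?B"
        obtain i where "j = p i" using permutes_surj[OF p] by (metis surjD)
        then show "j \<in> p ` ?A" using j pm by auto
      qed
    qed
    have "card ?B = card ?A" unfolding img[symmetric]
      by (rule card_image) (metis injD inj_onI permutes_inj[OF p])
    moreover have "?A \<subseteq> ?B \<or> ?B \<subseteq> ?A"
      by (rule downsets_nested) (use ml mm in \<open>fastforce+\<close>)
    ultimately show ?thesis
      by (metis card_subset_eq finite)
  qed
  show ?thesis
  proof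
    fix k
    have a: "l k \<le> m k" using key[of "m k"] by blast
    have b: "m k \<le> l k" using key[of "l k"] by blast
    show "l k = m k" using a b by simp
  qed
qed

lemma det_nonzero_perm:
  fixes A :: "real^'n::finite^'n"
  assumes "det A \<noteq> 0"
  shows "\<exists>p. p permutes UNIV \<and> (\<forall>i. A $ i $ p i \<noteq> 0)"
proof (rule ccontr)
  assume "\<not> ?thesis"
  then have "\<forall>p\<in>{p. p permutes UNIV}. of_int (sign p) * prod (\<lambda>i. A$i$p i) (UNIV :: 'n set) = 0"
    by auto
  then have "det A = 0" unfolding det_def by (rule sum.neutral)
  then show False using assms by simp
qed

lemma part2:
  fixes e f e2 f2 :: "'n::{finite,linorder} \<Rightarrow> 'n sp"
  assumes lag: "lagrangian L1" "lagrangian L2" "lagrangian M1" "lagrangian M2"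
    and sb: "symplectic_basis e f" and sp: "std_position_with e f \<Lambda> L1 M1 L2 M2"
    and sb2: "symplectic_basis e2 f2" and sp2: "std_position_with e2 f2 \<Lambda>2 L1 M1 L2 M2"
  shows "\<exists>h. orthogonal_matrix h \<and> h ** \<Lambda> = \<Lambda> ** h \<and> e2 = e \<cdot>\<^sub>f h \<and> f2 = f \<cdot>\<^sub>f h"
proof -
  define l where "l i = \<Lambda> $ i $ i" for i
  define l2 where "l2 i = \<Lambda>2 $ i $ i" for i
  have sd: "std_diag \<Lambda>" using sp unfolding std_position_with_def by blast
  have sd2: "std_diag \<Lambda>2" using sp2 unfolding std_position_with_def by blast
  have Ld: "\<Lambda> = diagm l" using std_diag_diagm[OF sd] unfolding l_def by simp
  have Ld2: "\<Lambda>2 = diagm l2" using std_diag_diagm[OF sd2] unfolding l2_def by simp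
  have L1: "L1 = span (range e)" and L2: "L2 = span (range f)"
    and M1: "M1 = span (range (\<lambda>i. e i + f i))"
    and M2: "M2 = span (range (\<lambda>i. e i - l i *\<^sub>R f i))"
    using sp unfolding std_position_with_def Ld fam_mult_diag by auto
  have L1': "L1 = span (range e2)" and L2': "L2 = span (range f2)"
    and M1': "M1 = span (range (\<lambda>i. e2 i + f2 i))"
    and M2': "M2 = span (range (\<lambda>i. e2 i - l2 i *\<^sub>R f2 i))"
    using sp2 unfolding std_position_with_def Ld2 fam_mult_diag by auto
  have mem1: "e i \<in> L1" "f i \<in> L2" "e i + f i \<in> M1" "e i - l i *\<^sub>R f i \<in> M2" for i
    unfolding L1 L2 M1 M2 by (auto intro: span_base)
  have mem2: "e2 i \<in> L1" "f2 i \<in> L2" "e2 i + f2 i \<in> M1" "e2 i - l2 i *\<^sub>R f2 i \<in> M2" for i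
    unfolding L1' L2' M1' M2' by (auto intro: span_base)
  note mem = mem1 mem2
  define h where "h = (\<chi> i j. omega (e2 j) (f i))"
  have hij: "h $ i $ j = omega (e2 j) (f i)" for i j unfolding h_def by simp
  note d = sb_dest[OF sb] and d2 = sb_dest[OF sb2]
  have a1: "omega (e2 j) (e i) = 0" for i j using lagr_omega[OF lag(1) mem(5) mem(1)] .
  have a2: "omega (f2 j) (f i) = 0" for i j using lagr_omega[OF lag(2) mem(6) mem(2)] .
  have b: "omega (f2 j) (e i) = - h $ i $ j" for i j
  proof -
    have "omega (e2 j + f2 j) (e i + f i) = 0" using lagr_omega[OF lag(3) mem(7) mem(3)] .
    then show ?thesis by (simp add: omega_simps a1 a2 hij)
  qed
  have e2eq: "e2 = e \<cdot>\<^sub>f h"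
  proof
    fix j
    show "e2 j = (e \<cdot>\<^sub>f h) j"
      by (subst sb_expand[OF sb, of "e2 j"]) (simp add: a1 fam_mult_def hij)
  qed
  have f2eq: "f2 = f \<cdot>\<^sub>f h"
  proof
    fix j
    show "f2 j = (f \<cdot>\<^sub>f h) j"
      by (subst sb_expand[OF sb, of "f2 j"]) (simp add: a2 b fam_mult_def sum_negf)
  qed
  have th: "transpose h ** h = mat 1"
  proof -
    have "(transpose h ** h) $ i $ j = mat 1 $ i $ j" for i j
    proof -
      have "omega (e2 i) (f2 j) = (\<Sum>k\<in>UNIV. h $ k $ j * h $ k $ i)"
        by (subst f2eq) (simp add: fam_mult_def omega_simps hij)
      then show ?thesis using d2(3)[of i j]
        by (simp add: matrix_matrix_mult_def transpose_def mat_def mult.commute)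
    qed
    then show ?thesis by (simp add: vec_eq_iff)
  qed
  then have orth: "orthogonal_matrix h"
    unfolding orthogonal_matrix_def using matrix_left_right_inverse by blast
  have rel: "l2 j * h $ k $ j = l k * h $ k $ j" for j k
  proof -
    have "omega (e2 j - l2 j *\<^sub>R f2 j) (e k - l k *\<^sub>R f k) = 0"
      using lagr_omega[OF lag(4) mem(8) mem(4)] .
    then show ?thesis by (simp add: omega_simps a1 a2 b hij)
  qed
  have "det h \<noteq> 0" using det_orthogonal_matrix[OF orth] by auto
  then obtain p where p: "p permutes UNIV" "\<And>i. h $ i $ p i \<noteq> 0"
    using det_nonzero_perm by blast
  have "l = l2"
  proof (rule sorted_perm_eq[OF _ _ p(1)])
    show "l i \<le> l j" if "i \<le> j" for i j using sd that unfolding std_diag_def l_def by blast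
    show "l2 i \<le> l2 j" if "i \<le> j" for i j using sd2 that unfolding std_diag_def l2_def by blast
    show "l2 (p i) = l i" for i using rel[of "p i" i] p(2)[of i] by simp
  qed
  then have comm: "h ** \<Lambda> = \<Lambda> ** h"
    unfolding Ld vec_eq_iff using rel by (simp add: mult_diag_right mult_diag_left mult.commute)
  show ?thesis using orth comm e2eq f2eq by blast
qed

lemma quad_zero:
  fixes a c :: real
  assumes h: "\<And>t. 2 * t * a + t * t * c \<le> 0"
  shows "a = 0"
proof -
  define k where "k = \<bar>c\<bar> + 1"
  have k: "k > 0" "2 * k + c > 0" unfolding k_def by auto
  have "2 * (a / k) * a + (a / k) * (a / k) * c \<le> 0" by (rule h)
  then have "(2 * (a / k) * a + (a / k) * (a / k) * c) * (k * k) \<le> 0"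
    using k by (simp add: mult_nonpos_nonneg)
  moreover have "(2 * (a / k) * a + (a / k) * (a / k) * c) * (k * k) = (a * a) * (2 * k + c)"
    using k by (simp add: field_simps)
  ultimately have "(a * a) * (2 * k + c) \<le> 0" by simp
  then have "a * a \<le> 0" using k(2) by (simp add: mult_le_0_iff)
  then show "a = 0" by (metis mult_eq_0_iff not_square_less_zero order_antisym_conv zero_le_square)
qed

definition odiag :: "('a \<Rightarrow> 'a \<Rightarrow> real) \<Rightarrow> ('a \<Rightarrow> 'a \<Rightarrow> real) \<Rightarrow> 'a list \<Rightarrow> bool" where
  "odiag B Q vs \<longleftrightarrow> (\<forall>i<length vs. \<forall>j<length vs. B (vs!i) (vs!j) = (if i = j then 1 else 0) \<and>
      (i \<noteq> j \<longrightarrow> Q (vs!i) (vs!j) = 0)) \<and>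
     (\<forall>i j. i \<le> j \<longrightarrow> j < length vs \<longrightarrow> Q (vs!j) (vs!j) \<le> Q (vs!i) (vs!i))"

context
  fixes B Q :: "'a::euclidean_space \<Rightarrow> 'a \<Rightarrow> real"
  assumes bB: "bilinear B" and bQ: "bilinear Q" and sB: "\<And>x y. B x y = B y x"
    and sQ: "\<And>x y. Q x y = Q y x" and pB: "\<And>x. x \<noteq> 0 \<Longrightarrow> B x x > 0"
begin

lemma hom: "Q (c *\<^sub>R x) (c *\<^sub>R x) = c * c * Q x x" "B (c *\<^sub>R x) (c *\<^sub>R x) = c * c * B x x"
  by (simp_all add: bilinear_lmul[OF bQ] bilinear_rmul[OF bQ] bilinear_lmul[OF bB] bilinear_rmul[OF bB])

lemma maxvec:
  assumes V: "subspace V" and nz: "V \<noteq> {0}"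
  shows "\<exists>v\<in>V. B v v = 1 \<and> (\<forall>x\<in>V. Q x x \<le> Q v v * B x x)"
proof -
  let ?K = "V \<inter> sphere 0 1"
  let ?R = "\<lambda>x. Q x x / B x x"
  have cK: "compact ?K" using closed_subspace[OF V] compact_sphere by (rule closed_Int_compact)
  obtain x where x: "x \<in> V" "x \<noteq> 0" using nz V subspace_0 by blast
  have "x /\<^sub>R norm x \<in> ?K" using x V by (simp add: subspace_scale)
  then have neK: "?K \<noteq> {}" by blast
  have bbQ: "bounded_bilinear Q" and bbB: "bounded_bilinear B"
    using bQ bB bilinear_conv_bounded_bilinear by blast+
  have cQ: "continuous_on ?K (\<lambda>x. Q x x)"
    by (rule bounded_bilinear.continuous_on[OF bbQ]) (rule continuous_on_id)+
  have cB: "continuous_on ?K (\<lambda>x. B x x)"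
    by (rule bounded_bilinear.continuous_on[OF bbB]) (rule continuous_on_id)+
  have "continuous_on ?K ?R"
    proof (rule continuous_on_divide[OF cQ cB], intro ballI)
    fix x assume "x \<in> ?K"
    then have "x \<noteq> 0" by auto
    then show "B x x \<noteq> 0" using pB[of x] by simp
  qed
  then obtain v0 where v0: "v0 \<in> ?K" "\<And>y. y \<in> ?K \<Longrightarrow> ?R y \<le> ?R v0"
    using continuous_attains_sup[OF cK neK] by blast
  have v0nz: "v0 \<noteq> 0" using v0(1) by auto
  have Bv0: "B v0 v0 > 0" using pB[OF v0nz] .
  define v where "v = (1 / sqrt (B v0 v0)) *\<^sub>R v0"
  have vV: "v \<in> V" using v0(1) V unfolding v_def by (simp add: subspace_scale)
  have Bv: "B v v = 1" unfolding v_def hom using Bv0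
    by (simp add: field_simps)
  have Qv: "Q v v = ?R v0" unfolding v_def hom using Bv0
    by (simp add: field_simps)
  have "Q y y \<le> Q v v * B y y" if y: "y \<in> V" for y
  proof (cases "y = 0")
    case True then show ?thesis
      by (simp add: bilinear_lzero[OF bQ] bilinear_lzero[OF bB])
  next
    case False
    define z where "z = (1 / norm y) *\<^sub>R y"
    have zK: "z \<in> ?K" using y V False unfolding z_def by (simp add: subspace_scale)
    have Rz: "?R z = ?R y" unfolding z_def hom using False by simp
    have By: "B y y > 0" using pB[OF False] .
    have "?R y \<le> Q v v" using v0(2)[OF zK] Rz Qv by simp
    then show ?thesis using By by (simp add: divide_le_eq)
  qed
  then show ?thesis using vV Bv by blast
qed

lemma variation:
  assumes Bvv: "B v v = 1" and Bvw: "B v w = 0"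
    and le: "\<And>t. Q (v + t *\<^sub>R w) (v + t *\<^sub>R w) \<le> Q v v * B (v + t *\<^sub>R w) (v + t *\<^sub>R w)"
  shows "Q v w = 0"
proof (rule quad_zero)
  fix t :: real
  have eQ: "Q (v + t *\<^sub>R w) (v + t *\<^sub>R w) = Q v v + 2 * t * Q v w + t * t * Q w w"
    by (simp add: bilinear_ladd[OF bQ] bilinear_radd[OF bQ] bilinear_lmul[OF bQ] bilinear_rmul[OF bQ]
        sQ[of w v] algebra_simps)
  have eB: "B (v + t *\<^sub>R w) (v + t *\<^sub>R w) = 1 + t * t * B w w"
    by (simp add: bilinear_ladd[OF bB] bilinear_radd[OF bB] bilinear_lmul[OF bB] bilinear_rmul[OF bB]
        sB[of w v] Bvv Bvw algebra_simps)
  show "2 * t * Q v w + t * t * (Q w w - Q v v * B w w) \<le> 0"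
    using le[of t] unfolding eQ eB by (simp add: algebra_simps)
qed

lemma simdiag_k:
  "\<forall>V. subspace V \<longrightarrow> dim V = k \<longrightarrow> (\<exists>vs. length vs = k \<and> set vs \<subseteq> V \<and> odiag B Q vs)"
proof (induction k)
  case 0
  then show ?case by (auto simp: odiag_def intro!: exI[of _ "[]"])
next
  case (Suc k)
  show ?case
  proof (intro allI impI)
    fix V :: "'a set" assume V: "subspace V" and dV: "dim V = Suc k"
    have nz: "V \<noteq> {0}"
    proof
      assume "V = {0}"
      then have "dim V = 0" using dim_span[of "{}"] by (simp add: span_empty)
      then show False using dV by simp
    qed
    obtain v where v: "v \<in> V" "B v v = 1" "\<And>x. x \<in> V \<Longrightarrow> Q x x \<le> Q v v * B x x"
      using maxvec[OF V nz] by blast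
    define V' where "V' = {w \<in> V. B v w = 0}"
    have V'V: "V' \<subseteq> V" unfolding V'_def by blast
    have sV': "subspace V'"
      unfolding V'_def subspace_def using V
      by (auto simp: subspace_def bilinear_radd[OF bB] bilinear_rmul[OF bB] bilinear_rzero[OF bB])
    have spV': "span V' = V'" using sV' by (simp add: span_eq_iff)
    have "v \<notin> V'" using v(2) unfolding V'_def by auto
    then have vnot: "v \<notin> span V'" using spV' by metis
    have spanV: "span (insert v V') = V"
    proof
      show "span (insert v V') \<subseteq> V" using V v(1) V'V by (intro span_minimal) auto
      show "V \<subseteq> span (insert v V')"
      proof
        fix x assume x: "x \<in> V"
        have "x - B v x *\<^sub>R v \<in> V'"
          unfolding V'_def using x v V
          by (simp add: subspace_diff subspace_scale bilinear_rsub[OF bB] bilinear_rmul[OF bB])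
        then have a: "x - B v x *\<^sub>R v \<in> span (insert v V')" by (simp add: span_base)
        have b: "B v x *\<^sub>R v \<in> span (insert v V')" by (simp add: span_base span_mul)
        have "x = (x - B v x *\<^sub>R v) + B v x *\<^sub>R v" by simp
        then show "x \<in> span (insert v V')" using span_add[OF a b] by metis
      qed
    qed
    have "dim V = dim V' + 1"
      using dim_insert[of v V'] vnot spanV dim_span[of "insert v V'"] by simp
    then have dV': "dim V' = k" using dV by simp
    obtain ws where ws: "length ws = k" "set ws \<subseteq> V'" "odiag B Q ws"
      using Suc.IH sV' dV' by blast
    have wsV': "ws ! j \<in> V'" if "j < k" for j using ws(1,2) that nth_mem by blast
    have Bvw: "B v (ws ! j) = 0" if "j < k" for j using wsV'[OF that] unfolding V'_def by blast
    have Qvw: "Q v (ws ! j) = 0" if j: "j < k" for j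
    proof (rule variation[OF v(2) Bvw[OF j]])
      fix t :: real
      have "v + t *\<^sub>R ws ! j \<in> V" using v(1) V V'V wsV'[OF j]
        by (meson subsetD subspace_add subspace_scale)
      then show "Q (v + t *\<^sub>R ws ! j) (v + t *\<^sub>R ws ! j) \<le> Q v v * B (v + t *\<^sub>R ws ! j) (v + t *\<^sub>R ws ! j)"
        by (rule v(3))
    qed
    have wsB: "B (ws ! i) (ws ! j) = (if i = j then 1 else 0)" "i \<noteq> j \<longrightarrow> Q (ws!i) (ws!j) = 0"
      if "i < k" "j < k" for i j using ws(3) ws(1) that unfolding odiag_def by auto
    have wsS: "Q (ws!j) (ws!j) \<le> Q (ws!i) (ws!i)" if "i \<le> j" "j < k" for i j
      using ws(3) ws(1) that unfolding odiag_def by auto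
    have wsle: "Q (ws!j) (ws!j) \<le> Q v v" if "j < k" for j
      using v(3)[of "ws!j"] wsV'[OF that] V'V wsB(1)[OF that that] by auto
    have od: "odiag B Q (v # ws)"
      unfolding odiag_def
    proof (intro conjI allI impI)
      fix i j assume i: "i < length (v # ws)" and j: "j < length (v # ws)"
      show "B ((v # ws) ! i) ((v # ws) ! j) = (if i = j then 1 else 0)"
      proof (cases i; cases j)
        fix i' j' assume "i = Suc i'" "j = Suc j'"
        then show ?thesis using wsB(1)[of i' j'] i j ws(1) by simp
      qed (use v(2) Bvw sB i j ws(1) in auto)
      assume ij: "i \<noteq> j"
      show "Q ((v # ws) ! i) ((v # ws) ! j) = 0"
      proof (cases i; cases j)
        fix i' j' assume "i = Suc i'" "j = Suc j'"
        then show ?thesis using wsB(2)[of i' j'] i j ij ws(1) by simp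
      qed (use Qvw sQ i j ij ws(1) in auto)
    next
      fix i j assume ij: "i \<le> j" and j: "j < length (v # ws)"
      show "Q ((v # ws) ! j) ((v # ws) ! j) \<le> Q ((v # ws) ! i) ((v # ws) ! i)"
      proof (cases i; cases j)
        fix i' j' assume "i = Suc i'" "j = Suc j'"
        then show ?thesis using wsS[of i' j'] ij j ws(1) by simp
      qed (use wsle ij j ws(1) in auto)
    qed
    show "\<exists>vs. length vs = Suc k \<and> set vs \<subseteq> V \<and> odiag B Q vs"
      using od ws(1,2) v(1) V'V by (intro exI[of _ "v # ws"]) auto
  qed
qed

lemma simdiag_UNIV: "\<exists>vs. length vs = DIM('a) \<and> odiag B Q vs"
  using simdiag_k[of "DIM('a)"] by (metis dim_UNIV subspace_UNIV)

end

lemma card_sum_UNIV: "card (UNIV::('a + 'a) set) = card (UNIV::'a::finite set) + card (UNIV::'a set)"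
proof -
  have "card ((UNIV::'a set) <+> (UNIV::'a set)) = CARD('a) + CARD('a)"
    by (rule card_Plus) (rule finite)+
  then show ?thesis by simp
qed

lemma graph_map_props:
  fixes LA LB M :: "'n::finite sp set"
  assumes LB: "lagrangian LB" and M: "lagrangian M" and tr: "M \<inter> LB = {0}"
  shows "graph_map LA M LB y \<in> LB \<and> y + graph_map LA M LB y \<in> M"
    and "w \<in> LB \<Longrightarrow> y + w \<in> M \<Longrightarrow> graph_map LA M LB y = w"
proof -
  have sM: "subspace M" and sL: "subspace LB" using LB M by (auto simp: lagrangian_def)
  let ?S = "{x + z |x z. x \<in> M \<and> z \<in> LB}"
  have d: "dim ?S + dim (M \<inter> LB) = dim M + dim LB" by (rule dim_sums_Int[OF sM sL])
  have d0: "dim (M \<inter> LB) = 0" by (simp add: tr)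
  have dM: "dim M = CARD('n)" and dL: "dim LB = CARD('n)" using LB M by (auto simp: lagrangian_def)
  have "dim ?S = CARD('n) + CARD('n)" using d d0 dM dL by linarith
  then have "dim ?S = DIM('n sp)" by (simp add: card_sum_UNIV)
  then have "span ?S = UNIV" using dim_eq_full by blast
  moreover have "span ?S = ?S" using subspace_sums[OF sM sL] by (simp add: span_eq_iff)
  ultimately have "y \<in> ?S" by blast
  then obtain m z where mz: "m \<in> M" "z \<in> LB" "y = m + z" by blast
  have uniq: "w1 = w2" if "w1 \<in> LB" "y + w1 \<in> M" "w2 \<in> LB" "y + w2 \<in> M" for w1 w2
  proof -
    have "(y + w1) - (y + w2) \<in> M" by (rule subspace_diff[OF sM that(2) that(4)])
    moreover have "(y + w1) - (y + w2) = w1 - w2" by simp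
    ultimately have "w1 - w2 \<in> M" by simp
    moreover have "w1 - w2 \<in> LB" by (rule subspace_diff[OF sL that(1) that(3)])
    ultimately have "w1 - w2 \<in> M \<inter> LB" by simp
    then show ?thesis using tr by auto
  qed
  have w0: "- z \<in> LB" by (rule subspace_neg[OF sL mz(2)])
  have w1: "y + - z \<in> M" using mz(1) unfolding mz(3) by simp
  have ex: "\<exists>!w. w \<in> LB \<and> y + w \<in> M"
  proof (rule ex1I[of _ "- z"])
    show "- z \<in> LB \<and> y + - z \<in> M" using w0 w1 by blast
    fix w assume "w \<in> LB \<and> y + w \<in> M"
    then show "w = - z" using uniq[OF _ _ w0 w1] by blast
  qed
  show "graph_map LA M LB y \<in> LB \<and> y + graph_map LA M LB y \<in> M"
    unfolding graph_map_def by (rule theI'[OF ex])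
  show "w \<in> LB \<Longrightarrow> y + w \<in> M \<Longrightarrow> graph_map LA M LB y = w"
    unfolding graph_map_def using ex by (rule the1_equality) simp
qed

lemma lagr_basis:
  fixes L :: "'n::finite sp set"
  assumes "lagrangian L"
  shows "\<exists>a::'n \<Rightarrow> 'n sp. inj a \<and> range a \<subseteq> L \<and> independent (range a)"
proof -
  obtain B where B: "B \<subseteq> L" "independent B" "L \<subseteq> span B" "card B = dim L"
    using basis_exists by blast
  have fB: "finite B" using independent_bound[OF B(2)] by blast
  have "card B = CARD('n)" using B(4) assms by (simp add: lagrangian_def)
  then obtain a where "bij_betw a (UNIV::'n set) B"
    using finite_same_card_bij[OF finite fB] by metis
  then have "inj a" "range a = B" by (auto simp: bij_betw_def)
  then show ?thesis using B by blast
qed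

lemma indep_aux: "independent (range (a::'n::finite \<Rightarrow> 'm::finite sp)) \<Longrightarrow> (\<Sum>v\<in>range a. c v *\<^sub>R v) = 0 \<Longrightarrow> c (a k) = 0"
  unfolding independent_explicit by auto

lemma indep_coeff:
  fixes a :: "'n::finite \<Rightarrow> 'm::finite sp"
  assumes inj: "inj a" and ind: "independent (range a)" and z: "(\<Sum>k\<in>UNIV. x k *\<^sub>R a k) = 0"
  shows "x k = 0"
proof -
  define c where "c v = x (inv a v)" for v
  have "(\<Sum>v\<in>range a. c v *\<^sub>R v) = (\<Sum>k\<in>UNIV. c (a k) *\<^sub>R a k)"
    by (rule sum.reindex[OF inj, unfolded comp_def])
  also have "\<dots> = 0" using z inj unfolding c_def by simp
  finally have "(\<Sum>v\<in>range a. c v *\<^sub>R v) = 0" .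
  then have "c (a k) = 0" using ind indep_aux by blast
  then show ?thesis using inj unfolding c_def by simp
qed

lemma omega_combo:
  "omega (\<Sum>k\<in>UNIV. x k *\<^sub>R u k) (\<Sum>l\<in>UNIV. y l *\<^sub>R w l) =
    (\<Sum>k\<in>UNIV. \<Sum>l\<in>UNIV. x k * y l * omega (u k) (w l))"
  by (simp add: omega_simps sum_distrib_left mult.assoc) (rule sum.swap[THEN trans], simp add: mult.left_commute)

lemma lagr_sym:
  assumes "lagrangian L" "lagrangian L'" "lagrangian M"
    "y \<in> L" "z \<in> L" "y' \<in> L'" "z' \<in> L'" "y + y' \<in> M" "z + z' \<in> M"
  shows "omega y z' = omega z y'"
proof -
  have "omega (y + y') (z + z') = 0" using lagr_omega[OF assms(3,8,9)] .
  moreover have "omega y z = 0" using lagr_omega[OF assms(1,4,5)] .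
  moreover have "omega y' z' = 0" using lagr_omega[OF assms(2,6,7)] .
  moreover have "omega y' z = - omega z y'" by (rule omega_antisym)
  ultimately show ?thesis by (simp add: omega_simps)
qed

definition qform :: "('n::finite \<Rightarrow> 'n \<Rightarrow> real) \<Rightarrow> real^'n \<Rightarrow> real^'n \<Rightarrow> real" where
  "qform G x y = (\<Sum>k\<in>UNIV. \<Sum>l\<in>UNIV. x $ k * y $ l * G k l)"

lemma qform_bilinear: "bilinear (qform G)"
  unfolding bilinear_def
proof (intro conjI allI)
  show "linear (qform G x)" for x
    by (rule linearI) (simp_all add: qform_def algebra_simps sum.distrib sum_distrib_left)
  show "linear (\<lambda>x. qform G x y)" for y
    by (rule linearI) (simp_all add: qform_def algebra_simps sum.distrib sum_distrib_left)
qed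

lemma qform_sym: "(\<And>k l. G k l = G l k) \<Longrightarrow> qform G x y = qform G y x"
  unfolding qform_def by (subst sum.swap) (simp add: mult.commute mult.left_commute)

definition idx :: "'n::{finite,linorder} \<Rightarrow> nat" where "idx i = card {k. k < i}"

lemma idx_mono: "i < j \<Longrightarrow> idx i < idx j"
  unfolding idx_def by (rule psubset_card_mono) auto

lemma idx_le: "idx i \<le> idx j" if "i \<le> j"
proof (cases "i = j")
  case False
  then have "i < j" using that by simp
  then show ?thesis using idx_mono[of i j] by simp
qed simp

lemma idx_inj: "idx i = idx j \<Longrightarrow> i = j"
  using idx_mono[of i j] idx_mono[of j i] by (cases i j rule: linorder_cases) auto

lemma idx_less: "idx (i::'n::{finite,linorder}) < CARD('n)"
  unfolding idx_def by (rule psubset_card_mono) auto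

lemma subspace_comb:
  assumes "subspace S" "\<And>k. u k \<in> S"
  shows "(\<Sum>k\<in>A. c k *\<^sub>R u k) \<in> S"
  using assms by (intro subspace_sum) (auto intro: subspace_scale)

lemma qform_omega:
  "qform (\<lambda>k l. omega (u k) (w l)) x y =
     omega (\<Sum>k\<in>UNIV. x $ k *\<^sub>R u k) (\<Sum>l\<in>UNIV. y $ l *\<^sub>R w l)"
  unfolding qform_def omega_combo by simp

lemma part1:
  fixes L1 M1 L2 M2 :: "('n::{finite,linorder}) sp set"
  assumes pq: "positive_quadruple L1 M1 L2 M2"
  shows "\<exists>e f \<Lambda>. symplectic_basis e f \<and> std_position_with e f \<Lambda> L1 M1 L2 M2"
proof -
  have lag: "lagrangian L1" "lagrangian M1" "lagrangian L2" "lagrangian M2"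
    using pq unfolding positive_quadruple_def pw_transverse_def by auto
  have tr1: "L1 \<inter> M1 = {0}" and tr2: "M1 \<inter> L2 = {0}" and tr4: "M2 \<inter> L1 = {0}"
    using pq unfolding positive_quadruple_def pw_transverse_def transverse_def by auto
  have pd1: "\<And>v. v \<in> L1 \<Longrightarrow> v \<noteq> 0 \<Longrightarrow> maslov_form L1 M1 L2 v v > 0"
    and pd2: "\<And>v. v \<in> L2 \<Longrightarrow> v \<noteq> 0 \<Longrightarrow> maslov_form L2 M2 L1 v v > 0"
    using pq unfolding positive_quadruple_def pos_def_on_def by auto
  have sL1: "subspace L1" and sL2: "subspace L2" and sM1: "subspace M1" and sM2: "subspace M2"
    using lag lagr_subspace by auto
  obtain a :: "'n \<Rightarrow> 'n sp" where a: "inj a" "range a \<subseteq> L1" "independent (range a)"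
    using lagr_basis[OF lag(1)] by blast
  have aL1: "a k \<in> L1" for k using a(2) by blast
  define T where "T = graph_map L1 M1 L2"
  define Sg where "Sg = graph_map L2 M2 L1"
  note gT = graph_map_props[where LA = L1 and LB = L2 and M = M1, OF lag(3) lag(2) tr2, folded T_def]
  note gS = graph_map_props[where LA = L2 and LB = L1 and M = M2, OF lag(1) lag(4) tr4, folded Sg_def]
  define ta where "ta k = T (a k)" for k
  define sa where "sa k = Sg (ta k)" for k
  have taL2: "ta k \<in> L2" and taM1: "a k + ta k \<in> M1" for k using gT(1) unfolding ta_def by auto
  have saL1: "sa k \<in> L1" and saM2: "ta k + sa k \<in> M2" for k using gS(1) unfolding sa_def by auto
  define G where "G k l = omega (a k) (ta l)" for k l
  define H where "H k l = omega (ta k) (sa l)" for k l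
  have Gsym: "G k l = G l k" for k l
    unfolding G_def by (rule lagr_sym[OF lag(1) lag(3) lag(2) aL1 aL1 taL2 taL2 taM1 taM1])
  have Hsym: "H k l = H l k" for k l
    unfolding H_def by (rule lagr_sym[OF lag(3) lag(1) lag(4) taL2 taL2 saL1 saL1 saM2 saM2])
  define Bf where "Bf = qform G"
  define Qf where "Qf = qform H"
  define A where "A x = (\<Sum>k\<in>UNIV. x $ k *\<^sub>R a k)" for x :: "real^('n::{finite,linorder})"
  define tx where "tx x = (\<Sum>k\<in>UNIV. x $ k *\<^sub>R ta k)" for x :: "real^('n::{finite,linorder})"
  define sx where "sx x = (\<Sum>k\<in>UNIV. x $ k *\<^sub>R sa k)" for x :: "real^('n::{finite,linorder})"
  have AL1: "A x \<in> L1" for x unfolding A_def by (rule subspace_comb[OF sL1 aL1])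
  have txL2: "tx x \<in> L2" for x unfolding tx_def by (rule subspace_comb[OF sL2 taL2])
  have sxL1: "sx x \<in> L1" for x unfolding sx_def by (rule subspace_comb[OF sL1 saL1])
  have AtM1: "A x + tx x \<in> M1" for x
  proof -
    have "A x + tx x = (\<Sum>k\<in>UNIV. x $ k *\<^sub>R (a k + ta k))"
      unfolding A_def tx_def by (simp add: scaleR_add_right sum.distrib)
    then show ?thesis using subspace_comb[OF sM1 taM1] by simp
  qed
  have tsM2: "tx x + sx x \<in> M2" for x
  proof -
    have "tx x + sx x = (\<Sum>k\<in>UNIV. x $ k *\<^sub>R (ta k + sa k))"
      unfolding sx_def tx_def by (simp add: scaleR_add_right sum.distrib)
    then show ?thesis using subspace_comb[OF sM2 saM2] by simp
  qed
  have Bf_eq: "Bf x y = omega (A x) (tx y)" for x y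
    unfolding Bf_def G_def A_def tx_def by (rule qform_omega)
  have Qf_eq: "Qf x y = omega (tx x) (sx y)" for x y
    unfolding Qf_def H_def sx_def tx_def by (rule qform_omega)
  have Anz: "A x \<noteq> 0" if "x \<noteq> 0" for x
  proof
    assume "A x = 0"
    then have "x $ k = 0" for k using indep_coeff[OF a(1) a(3), of "\<lambda>k. x $ k"] unfolding A_def by blast
    then show False using that by (simp add: vec_eq_iff)
  qed
  have posB: "Bf x x > 0" if "x \<noteq> 0" for x
  proof -
    have "T (A x) = tx x" using gT(2)[OF txL2 AtM1] .
    then have "Bf x x = maslov_form L1 M1 L2 (A x) (A x)"
      unfolding Bf_eq maslov_form_def T_def by simp
    then show ?thesis using pd1[OF AL1 Anz[OF that]] by simp
  qed
  have posQ: "Qf x x > 0" if "x \<noteq> 0" for x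
  proof -
    have txnz: "tx x \<noteq> 0"
    proof
      assume "tx x = 0"
      then have "A x \<in> L1 \<inter> M1" using AL1 AtM1[of x] by simp
      then show False using tr1 Anz[OF that] by auto
    qed
    have "Sg (tx x) = sx x" using gS(2)[OF sxL1 tsM2] .
    then have "Qf x x = maslov_form L2 M2 L1 (tx x) (tx x)"
      unfolding Qf_eq maslov_form_def Sg_def by simp
    then show ?thesis using pd2[OF txL2 txnz] by simp
  qed
  have bB: "bilinear Bf" and bQ: "bilinear Qf" unfolding Bf_def Qf_def by (rule qform_bilinear)+
  have sB: "Bf x y = Bf y x" and sQ: "Qf x y = Qf y x" for x y
    unfolding Bf_def Qf_def using qform_sym Gsym Hsym by blast+
  obtain vs where vs: "length vs = DIM(real^('n::{finite,linorder}))" "odiag Bf Qf vs"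
    using simdiag_UNIV[OF bB bQ sB sQ posB] by blast
  have lvs: "length vs = CARD('n)" using vs(1) by simp
  define p where "p i = vs ! idx i" for i :: 'n
  have il: "idx i < length vs" for i :: 'n using idx_less[of i] lvs by simp
  have Bp: "Bf (p i) (p j) = (if i = j then 1 else 0)" for i j
    using vs(2) il[of i] il[of j] idx_inj[of i j] unfolding odiag_def p_def by auto
  have Qp: "Qf (p i) (p j) = 0" if "i \<noteq> j" for i j
    using vs(2) il[of i] il[of j] idx_inj[of i j] that unfolding odiag_def p_def by auto
  define mu where "mu i = Qf (p i) (p i)" for i :: 'n
  have mono: "mu j \<le> mu i" if "i \<le> j" for i j
    using vs(2) il[of j] idx_le[OF that] unfolding odiag_def p_def mu_def by auto
  have pnz: "p i \<noteq> 0" for i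
  proof
    assume "p i = 0"
    then have "Bf (p i) (p i) = 0" unfolding Bf_def qform_def by simp
    then show False using Bp[of i i] by simp
  qed
  have mupos: "mu i > 0" for i unfolding mu_def using posQ[OF pnz] .
  define lam where "lam i = inverse (mu i)" for i
  have lampos: "lam i > 0" for i unfolding lam_def using mupos by simp
  define e where "e j = A (p j)" for j
  define f where "f j = tx (p j)" for j
  define g where "g j = sx (p j)" for j
  have eL1: "e j \<in> L1" and fL2: "f j \<in> L2" and gL1: "g j \<in> L1" and efM1: "e j + f j \<in> M1"
    and fgM2: "f j + g j \<in> M2" for j
    unfolding e_def f_def g_def using AL1 txL2 sxL1 AtM1 tsM2 by auto
  have ef: "omega (e i) (f j) = (if i = j then 1 else 0)" for i j
    using Bp[of i j] unfolding e_def f_def Bf_eq by simp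
  have fg: "omega (f i) (g j) = (if i = j then mu j else 0)" for i j
    using Qp[of i j] unfolding f_def g_def Qf_eq[symmetric] mu_def by auto
  have sb: "symplectic_basis e f"
  proof (rule sb_intro)
    show "omega (e i) (e j) = 0" for i j by (rule lagr_omega[OF lag(1) eL1 eL1])
    show "omega (f i) (f j) = 0" for i j by (rule lagr_omega[OF lag(3) fL2 fL2])
    show "omega (e i) (f j) = (if i = j then 1 else 0)" for i j by (rule ef)
  qed
  have geq: "g j = (- mu j) *\<^sub>R e j" for j
  proof -
    have ge: "omega (g j) (e i) = 0" for i by (rule lagr_omega[OF lag(1) gL1 eL1])
    have gf: "omega (g j) (f i) = - (if i = j then mu j else 0)" for i
      using omega_antisym[of "g j" "f i"] fg[of i j] by simp
    have "g j = (\<Sum>i\<in>UNIV. omega (g j) (f i) *\<^sub>R e i) - (\<Sum>i\<in>UNIV. omega (g j) (e i) *\<^sub>R f i)"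
      by (rule sb_expand[OF sb])
    also have "\<dots> = (\<Sum>i\<in>UNIV. (if i = j then (- mu j) *\<^sub>R e j else 0))"
      unfolding ge gf scaleR_zero_left sum.neutral_const diff_zero by (rule sum.cong) auto
    also have "\<dots> = (- mu j) *\<^sub>R e j" by simp
    finally show ?thesis .
  qed
  have eM2: "e j - lam j *\<^sub>R f j \<in> M2" for j
  proof -
    have "e j - lam j *\<^sub>R f j = (- lam j) *\<^sub>R (f j + g j)"
      using mupos[of j] unfolding geq lam_def by (simp add: algebra_simps)
    then show ?thesis using subspace_scale[OF sM2 fgM2[of j], of "- lam j"] by simp
  qed
  have fL: "f \<cdot>\<^sub>f diagm lam = (\<lambda>j. lam j *\<^sub>R f j)" by (rule fam_mult_diag)
  have "std_position_with e f (diagm lam) L1 M1 L2 M2"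
    unfolding std_position_with_def fL
  proof (intro conjI)
    show "std_diag (diagm lam)"
      unfolding std_diag_def diagm_def
    proof (intro conjI allI impI)
      fix i j :: 'n assume "i \<le> j"
      then have "mu j \<le> mu i" by (rule mono)
      then show "(\<chi> i j. if i = j then lam i else 0) $ i $ i \<le> (\<chi> i j. if i = j then lam i else 0) $ j $ j"
        using mupos[of j] unfolding lam_def by (simp add: le_imp_inverse_le)
    qed (simp_all add: lampos)
    show "L1 = span (range e)"
    proof (rule span_subspace[symmetric])
      show "range e \<subseteq> L1" using eL1 by blast
      show "L1 \<subseteq> span (range e)"
        using sb_span_char_e[OF sb] lagr_omega[OF lag(1) _ eL1] by blast
    qed (rule sL1)
    show "L2 = span (range f)"
    proof (rule span_subspace[symmetric])
      show "range f \<subseteq> L2" using fL2 by blast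
      show "L2 \<subseteq> span (range f)"
        using sb_span_char_f[OF sb] lagr_omega[OF lag(3) _ fL2] by blast
    qed (rule sL2)
    show "M1 = span (range (\<lambda>i. e i + f i))"
    proof (rule span_subspace[symmetric])
      show "range (\<lambda>i. e i + f i) \<subseteq> M1" using efM1 by blast
      show "M1 \<subseteq> span (range (\<lambda>i. e i + f i))"
      proof
        fix x assume x: "x \<in> M1"
        have "x \<in> span (range (\<lambda>j. e j + 1 *\<^sub>R f j))"
          by (rule sb_span_char[OF sb]) (simp add: lagr_omega[OF lag(2) x efM1])
        then show "x \<in> span (range (\<lambda>i. e i + f i))" by simp
      qed
    qed (rule sM1)
    show "M2 = span (range (\<lambda>i. e i - lam i *\<^sub>R f i))"
    proof (rule span_subspace[symmetric])
      show "range (\<lambda>i. e i - lam i *\<^sub>R f i) \<subseteq> M2" using eM2 by blast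
      show "M2 \<subseteq> span (range (\<lambda>i. e i - lam i *\<^sub>R f i))"
      proof
        fix x assume x: "x \<in> M2"
        have eq: "(\<lambda>j. e j + (- lam j) *\<^sub>R f j) = (\<lambda>i. e i - lam i *\<^sub>R f i)" by simp
        have "x \<in> span (range (\<lambda>j. e j + (- lam j) *\<^sub>R f j))"
          by (rule sb_span_char[OF sb]) (simp add: lagr_omega[OF lag(4) x eM2])
        then show "x \<in> span (range (\<lambda>i. e i - lam i *\<^sub>R f i))" unfolding eq .
      qed
    qed (rule sM2)
  qed
  then show ?thesis using sb by blast
qed

theorem proposition3p6:
  fixes L1 M1 L2 M2 :: "('n::{finite,linorder}) sp set"
  assumes "positive_quadruple L1 M1 L2 M2"
  shows "\<exists>e f \<Lambda>.
     symplectic_basis e f \<and> std_position_with e f \<Lambda> L1 M1 L2 M2 \<and>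
     (\<forall>e2 f2. symplectic_basis e2 f2 \<and> std_position e2 f2 L1 M1 L2 M2 \<longrightarrow>
        (\<exists>h. orthogonal_matrix h \<and> h ** \<Lambda> = \<Lambda> ** h \<and> e2 = e \<cdot>\<^sub>f h \<and> f2 = f \<cdot>\<^sub>f h)) \<and>
     (let u = diag_sqrt \<Lambda>;
          e' = f \<cdot>\<^sub>f u;
          f' = (\<lambda>i. - (e \<cdot>\<^sub>f matrix_inv u) i)
      in symplectic_basis e' f' \<and> std_position e' f' L2 M2 L1 M1)"
proof -
  obtain e f \<Lambda> where sb: "symplectic_basis e f" and sp: "std_position_with e f \<Lambda> L1 M1 L2 M2"
    using part1[OF assms] by blast
  have lag: "lagrangian L1" "lagrangian L2" "lagrangian M1" "lagrangian M2"
    using assms unfolding positive_quadruple_def pw_transverse_def by auto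
  have p2: "\<forall>e2 f2. symplectic_basis e2 f2 \<and> std_position e2 f2 L1 M1 L2 M2 \<longrightarrow>
        (\<exists>h. orthogonal_matrix h \<and> h ** \<Lambda> = \<Lambda> ** h \<and> e2 = e \<cdot>\<^sub>f h \<and> f2 = f \<cdot>\<^sub>f h)"
  proof (intro allI impI)
    fix e2 f2 assume h: "symplectic_basis e2 f2 \<and> std_position e2 f2 L1 M1 L2 M2"
    then obtain \<Lambda>2 where sp2: "std_position_with e2 f2 \<Lambda>2 L1 M1 L2 M2"
      unfolding std_position_def by blast
    show "\<exists>h. orthogonal_matrix h \<and> h ** \<Lambda> = \<Lambda> ** h \<and> e2 = e \<cdot>\<^sub>f h \<and> f2 = f \<cdot>\<^sub>f h"
      using part2[OF lag sb sp _ sp2] h by blast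
  qed
  show ?thesis using sb sp p2 part3[OF sb sp] by blast
qed

end
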